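(* Let $(\mathcal T,\otimes)$ be an $M$-compatible tensor triangulated category and let $\mathscr E$ be a split generator of $\mathcal T$. Let $\tau_{\mathscr E}=-\otimes\mathscr E$ (a triangulated endofunctor of $\mathcal T$). Then $\mathrm{Spc}_\otimes\mathcal T=\mathrm{Spc}^{\tau_{\mathscr E}}\mathcal T\subset\mathrm{Spc}_\triangle\mathcal T$.
   Context: All categories and functors are $k$-linear; triangulated categories are essentially small. For a triangulated category $\mathcal T$, $\mathrm{Th}(\mathcal T)$ is the set of thick subcategories (triangulated full subcategories closed under direct summands) with the Balmer topology (closed sets $V(\mathcal E)=\{\mathcal I:\mathcal I\cap\mathcal E=\emptyset\}$); $\mathscr E$ is a split generator if the smallest thick subcategory containing $\mathscr E$ is $\mathcal T$. A thick subcategory $\mathcal P$ is prime if the thick subcategories strictly containing it have a smallest element; $\mathrm{Spc}_\triangle\mathcal T$ is the subspace of prime thick subcategories. For a triangulated endofunctor $\tau$, $\tau^{-1}(\mathcal P)=\{M:\tau(M)\in\mathcal P\}$ and $\mathrm{Spc}^\tau\mathcal T=\{\mathcal P\in\mathrm{Spc}_\triangle\mathcal T:\tau^{-1}(\mathcal P)=\mathcal P\}$. In a tt-category $(\mathcal T,\otimes)$: a $\otimes$-ideal is a thick $\mathcal I$ with $M\otimes N\in\mathcal I$ for all $M\in\mathcal T,N\in\mathcal I$; a prime $\otimes$-ideal is a $\otimes$-ideal $\mathcal P\neq\mathcal T$ with $M\otimes N\in\mathcal P\Rightarrow M\in\mathcal P$ or $N\in\mathcal P$; $\mathrm{Spc}_\otimes\mathcal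 T$ is the subspace of prime $\otimes$-ideals. $(\mathcal T,\otimes)$ is $M$-compatible if a thick subcategory is a prime $\otimes$-ideal if and only if it is a prime thick subcategory that is a $\otimes$-ideal. *)

theory Defs
  imports Main
begin

text \<open>
  Object-level model of a (tensor) triangulated category.
  The data record:
   - tiso X Y    : X and Y are isomorphic,
   - tzero       : a zero object,
   - tshift, tshift_inv : the suspension functor and a quasi-inverse (on objects),
   - tsum X Y    : the direct sum (biproduct),
   - tdist X Y Z : there is a distinguished triangle X \<rightarrow> Y \<rightarrow> Z \<rightarrow> \<Sigma> X.
  Thick subcategories, primes, tensor ideals etc. are all determined by these data
  (full subcategories are identified with their sets of objects).
\<close>

record 'o tri_cat =
  tiso :: "'o \<Rightarrow> 'o \<Rightarrow> bool"
  tzero :: 'o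
  tshift :: "'o \<Rightarrow> 'o"
  tshift_inv :: "'o \<Rightarrow> 'o"
  tsum :: "'o \<Rightarrow> 'o \<Rightarrow> 'o"
  tdist :: "'o \<Rightarrow> 'o \<Rightarrow> 'o \<Rightarrow> bool"

record 'o tt_cat = "'o tri_cat" +
  ttensor :: "'o \<Rightarrow> 'o \<Rightarrow> 'o"
  tunit :: 'o

text \<open>Object-level shadow of the axioms of a triangulated category.\<close>
definition triangulated :: "('o, 'z) tri_cat_scheme \<Rightarrow> bool" where
  "triangulated T \<longleftrightarrow>
     equivp (tiso T)
   \<and> (\<forall>X Y. tiso T X Y \<longrightarrow> tiso T (tshift T X) (tshift T Y))
   \<and> (\<forall>X Y. tiso T X Y \<longrightarrow> tiso T (tshift_inv T X) (tshift_inv T Y))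
   \<and> (\<forall>X. tiso T (tshift T (tshift_inv T X)) X \<and> tiso T (tshift_inv T (tshift T X)) X)
   \<and> tiso T (tshift T (tzero T)) (tzero T)
   \<and> (\<forall>X X' Y Y'. tiso T X X' \<longrightarrow> tiso T Y Y' \<longrightarrow> tiso T (tsum T X Y) (tsum T X' Y'))
   \<and> (\<forall>X Y. tiso T (tsum T X Y) (tsum T Y X))
   \<and> (\<forall>X. tiso T (tsum T X (tzero T)) X)
   \<and> (\<forall>X Y Z X' Y' Z'. tdist T X Y Z \<longrightarrow> tiso T X X' \<longrightarrow> tiso T Y Y' \<longrightarrow> tiso T Z Z'
        \<longrightarrow> tdist T X' Y' Z')
   \<and> (\<forall>X. tdist T X X (tzero T))
   \<and> (\<forall>X Y. tdist T X (tsum T X Y) Y)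
   \<and> (\<forall>X Y. \<exists>Z. tdist T X Y Z)
   \<and> (\<forall>X Y Z. tdist T X Y Z \<longleftrightarrow> tdist T Y Z (tshift T X))"

definition triangulated_functor :: "('o, 'z) tri_cat_scheme \<Rightarrow> ('o \<Rightarrow> 'o) \<Rightarrow> bool" where
  "triangulated_functor T F \<longleftrightarrow>
     (\<forall>X Y. tiso T X Y \<longrightarrow> tiso T (F X) (F Y))
   \<and> (\<forall>X Y Z. tdist T X Y Z \<longrightarrow> tdist T (F X) (F Y) (F Z))
   \<and> (\<forall>X. tiso T (F (tshift T X)) (tshift T (F X)))
   \<and> tiso T (F (tzero T)) (tzero T)
   \<and> (\<forall>X Y. tiso T (F (tsum T X Y)) (tsum T (F X) (F Y)))"

definition tt_category :: "('o, 'z) tt_cat_scheme \<Rightarrow> bool" where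
  "tt_category T \<longleftrightarrow>
     triangulated T
   \<and> (\<forall>M. triangulated_functor T (\<lambda>X. ttensor T M X))
   \<and> (\<forall>M. triangulated_functor T (\<lambda>X. ttensor T X M))
   \<and> (\<forall>X Y. tiso T (ttensor T X Y) (ttensor T Y X))
   \<and> (\<forall>X Y Z. tiso T (ttensor T (ttensor T X Y) Z) (ttensor T X (ttensor T Y Z)))
   \<and> (\<forall>X. tiso T (ttensor T (tunit T) X) X)"

definition thick :: "('o, 'z) tri_cat_scheme \<Rightarrow> 'o set \<Rightarrow> bool" where
  "thick T I \<longleftrightarrow>
     tzero T \<in> I
   \<and> (\<forall>X Y. tiso T X Y \<longrightarrow> X \<in> I \<longrightarrow> Y \<in> I)
   \<and> (\<forall>X. X \<in> I \<longrightarrow> tshift T X \<in> I)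
   \<and> (\<forall>X. X \<in> I \<longrightarrow> tshift_inv T X \<in> I)
   \<and> (\<forall>X Y Z. tdist T X Y Z \<longrightarrow> X \<in> I \<longrightarrow> Y \<in> I \<longrightarrow> Z \<in> I)
   \<and> (\<forall>X Y Z. tdist T X Y Z \<longrightarrow> Y \<in> I \<longrightarrow> Z \<in> I \<longrightarrow> X \<in> I)
   \<and> (\<forall>X Y Z. tdist T X Y Z \<longrightarrow> X \<in> I \<longrightarrow> Z \<in> I \<longrightarrow> Y \<in> I)
   \<and> (\<forall>X Y. tsum T X Y \<in> I \<longrightarrow> X \<in> I)"

definition thick_closure :: "('o, 'z) tri_cat_scheme \<Rightarrow> 'o set \<Rightarrow> 'o set" where
  "thick_closure T S = \<Inter>{I. thick T I \<and> S \<subseteq> I}"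

definition split_generator :: "('o, 'z) tri_cat_scheme \<Rightarrow> 'o \<Rightarrow> bool" where
  "split_generator T E \<longleftrightarrow> thick_closure T {E} = UNIV"

definition prime_thick :: "('o, 'z) tri_cat_scheme \<Rightarrow> 'o set \<Rightarrow> bool" where
  "prime_thick T P \<longleftrightarrow> thick T P \<and>
     (\<exists>Q. thick T Q \<and> P \<subset> Q \<and> (\<forall>Q'. thick T Q' \<and> P \<subset> Q' \<longrightarrow> Q \<subseteq> Q'))"

definition Spc_tri :: "('o, 'z) tri_cat_scheme \<Rightarrow> 'o set set" where
  "Spc_tri T = {P. prime_thick T P}"

definition Spc_fix :: "('o, 'z) tri_cat_scheme \<Rightarrow> ('o \<Rightarrow> 'o) \<Rightarrow> 'o set set" where
  "Spc_fix T \<tau> = {P \<in> Spc_tri T. \<tau> -` P = P}"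

definition tensor_ideal :: "('o, 'z) tt_cat_scheme \<Rightarrow> 'o set \<Rightarrow> bool" where
  "tensor_ideal T I \<longleftrightarrow> thick T I \<and> (\<forall>M N. N \<in> I \<longrightarrow> ttensor T M N \<in> I)"

definition prime_tensor_ideal :: "('o, 'z) tt_cat_scheme \<Rightarrow> 'o set \<Rightarrow> bool" where
  "prime_tensor_ideal T P \<longleftrightarrow> tensor_ideal T P \<and> P \<noteq> UNIV
     \<and> (\<forall>M N. ttensor T M N \<in> P \<longrightarrow> M \<in> P \<or> N \<in> P)"

definition Spc_tensor :: "('o, 'z) tt_cat_scheme \<Rightarrow> 'o set set" where
  "Spc_tensor T = {P. prime_tensor_ideal T P}"

definition M_compatible :: "('o, 'z) tt_cat_scheme \<Rightarrow> bool" where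
  "M_compatible T \<longleftrightarrow>
     (\<forall>I. thick T I \<longrightarrow> (prime_tensor_ideal T I \<longleftrightarrow> prime_thick T I \<and> tensor_ideal T I))"

end

theory Submission
  imports Defs
begin

lemma preimage_thick:
  assumes tr: "triangulated T" and F: "triangulated_functor T F" and P: "thick T P"
  shows "thick T (F -` P)"
proof -
  have eq: "equivp (tiso T)" using tr unfolding triangulated_def by simp
  have symI: "\<And>X Y. tiso T X Y \<Longrightarrow> tiso T Y X" using eq by (meson equivp_symp)
  have rep: "\<And>X Y. tiso T X Y \<Longrightarrow> X \<in> P \<Longrightarrow> Y \<in> P" using P unfolding thick_def by blast
  have si: "\<And>X. tiso T (tshift T (tshift_inv T X)) X \<and> tiso T (tshift_inv T (tshift T X)) X"
    using tr unfolding triangulated_def by simp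
  have Fiso: "\<And>X Y. tiso T X Y \<Longrightarrow> tiso T (F X) (F Y)" using F unfolding triangulated_functor_def by blast
  have Fsh: "\<And>X. tiso T (F (tshift T X)) (tshift T (F X))" using F unfolding triangulated_functor_def by blast
  have Fz: "tiso T (F (tzero T)) (tzero T)" using F unfolding triangulated_functor_def by blast
  have Fs: "\<And>X Y. tiso T (F (tsum T X Y)) (tsum T (F X) (F Y))" using F unfolding triangulated_functor_def by blast
  have Fd: "\<And>X Y Z. tdist T X Y Z \<Longrightarrow> tdist T (F X) (F Y) (F Z)" using F unfolding triangulated_functor_def by blast
  have Psh: "\<And>X. X \<in> P \<Longrightarrow> tshift T X \<in> P" and Pshi: "\<And>X. X \<in> P \<Longrightarrow> tshift_inv T X \<in> P"
    and Pz: "tzero T \<in> P" and Psum: "\<And>X Y. tsum T X Y \<in> P \<Longrightarrow> X \<in> P"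
    using P unfolding thick_def by blast+
  have d1: "\<And>X Y Z. tdist T X Y Z \<Longrightarrow> X \<in> P \<Longrightarrow> Y \<in> P \<Longrightarrow> Z \<in> P"
   and d2: "\<And>X Y Z. tdist T X Y Z \<Longrightarrow> Y \<in> P \<Longrightarrow> Z \<in> P \<Longrightarrow> X \<in> P"
   and d3: "\<And>X Y Z. tdist T X Y Z \<Longrightarrow> X \<in> P \<Longrightarrow> Z \<in> P \<Longrightarrow> Y \<in> P"
    using P unfolding thick_def by blast+
  show ?thesis
    unfolding thick_def
  proof (intro conjI allI impI)
    show "tzero T \<in> F -` P" using rep[OF symI[OF Fz] Pz] by simp
  next
    fix X Y assume "tiso T X Y" "X \<in> F -` P" thus "Y \<in> F -` P" using rep Fiso by blast
  next
    fix X assume "X \<in> F -` P" thus "tshift T X \<in> F -` P" using rep[OF symI[OF Fsh]] Psh by blast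
  next
    fix X assume X: "X \<in> F -` P"
    have "F (tshift T (tshift_inv T X)) \<in> P" using rep[OF symI[OF Fiso[OF conjunct1[OF si]]]] X by blast
    hence "tshift T (F (tshift_inv T X)) \<in> P" using rep[OF Fsh] by blast
    hence "tshift_inv T (tshift T (F (tshift_inv T X))) \<in> P" using Pshi by blast
    thus "tshift_inv T X \<in> F -` P" using rep[OF conjunct2[OF si]] by blast
  next
    fix X Y Z assume "tdist T X Y Z" "X \<in> F -` P" "Y \<in> F -` P" thus "Z \<in> F -` P" using d1 Fd by blast
  next
    fix X Y Z assume "tdist T X Y Z" "Y \<in> F -` P" "Z \<in> F -` P" thus "X \<in> F -` P" using d2 Fd by blast
  next
    fix X Y Z assume "tdist T X Y Z" "X \<in> F -` P" "Z \<in> F -` P" thus "Y \<in> F -` P" using d3 Fd by blast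
  next
    fix X Y assume "tsum T X Y \<in> F -` P" thus "X \<in> F -` P" using rep[OF Fs] Psum by blast
  qed
qed

theorem mainTheorem6:
  fixes T :: "('o, 'z) tt_cat_scheme" and E :: 'o
  assumes "tt_category T"
    and "M_compatible T"
    and "split_generator T E"
  shows "Spc_tensor T = Spc_fix T (\<lambda>M. ttensor T M E) \<and> Spc_fix T (\<lambda>M. ttensor T M E) \<subseteq> Spc_tri T"
proof -
  have tr: "triangulated T" using assms(1) unfolding tt_category_def by blast
  have Fr: "\<And>N. triangulated_functor T (\<lambda>X. ttensor T X N)" using assms(1) unfolding tt_category_def by blast
  have comm: "\<And>X Y. tiso T (ttensor T X Y) (ttensor T Y X)" using assms(1) unfolding tt_category_def by blast
  have gen: "\<And>I. thick T I \<Longrightarrow> E \<in> I \<Longrightarrow> I = UNIV"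
    using assms(3) unfolding split_generator_def thick_closure_def by blast
  have rep: "\<And>P X Y. thick T P \<Longrightarrow> tiso T X Y \<Longrightarrow> X \<in> P \<Longrightarrow> Y \<in> P" unfolding thick_def by blast
  have A: "Spc_tensor T \<subseteq> Spc_fix T (\<lambda>M. ttensor T M E)"
  proof
    fix P assume "P \<in> Spc_tensor T"
    hence pt: "prime_tensor_ideal T P" unfolding Spc_tensor_def by simp
    hence th: "thick T P" and ti: "tensor_ideal T P" and nu: "P \<noteq> UNIV"
      and pr: "\<And>M N. ttensor T M N \<in> P \<Longrightarrow> M \<in> P \<or> N \<in> P"
      unfolding prime_tensor_ideal_def tensor_ideal_def by blast+
    have "prime_thick T P" using assms(2) th pt unfolding M_compatible_def by blast
    moreover have "(\<lambda>M. ttensor T M E) -` P = P"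
    proof (intro set_eqI iffI)
      fix M assume "M \<in> (\<lambda>M. ttensor T M E) -` P"
      hence "M \<in> P \<or> E \<in> P" using pr by simp
      thus "M \<in> P" using gen th nu by blast
    next
      fix M assume "M \<in> P"
      hence "ttensor T E M \<in> P" using ti unfolding tensor_ideal_def by blast
      thus "M \<in> (\<lambda>M. ttensor T M E) -` P" using rep[OF th comm] by simp
    qed
    ultimately show "P \<in> Spc_fix T (\<lambda>M. ttensor T M E)" unfolding Spc_fix_def Spc_tri_def by simp
  qed
  have B: "Spc_fix T (\<lambda>M. ttensor T M E) \<subseteq> Spc_tensor T"
  proof
    fix P assume "P \<in> Spc_fix T (\<lambda>M. ttensor T M E)"
    hence pth: "prime_thick T P" and fx: "(\<lambda>M. ttensor T M E) -` P = P"
      unfolding Spc_fix_def Spc_tri_def by auto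
    have th: "thick T P" using pth unfolding prime_thick_def by blast
    have "tensor_ideal T P" unfolding tensor_ideal_def
    proof (intro conjI th allI impI)
      fix M N assume N: "N \<in> P"
      have "ttensor T N E \<in> P" using fx N by blast
      hence "E \<in> (\<lambda>X. ttensor T X N) -` P" using rep[OF th comm] by simp
      hence "(\<lambda>X. ttensor T X N) -` P = UNIV" using gen preimage_thick[OF tr Fr th] by blast
      thus "ttensor T M N \<in> P" by blast
    qed
    thus "P \<in> Spc_tensor T" using assms(2) th pth unfolding M_compatible_def Spc_tensor_def by blast
  qed
  have C: "Spc_fix T (\<lambda>M. ttensor T M E) \<subseteq> Spc_tri T" unfolding Spc_fix_def by blast
  show ?thesis using A B C by blast
qed

end
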